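(* For every natural number $n \geq 2$, there exists a regular graph $G_n$ with $\chi(G_n) = n = \gamma(G_n)$.
   Context: All graphs are finite and simple; $\chi$ denotes chromatic number. A set $D \subseteq V(G)$ is a total dominating set of $G$ if every vertex of $V(G)$ is adjacent to some vertex of $D$. Define $\gamma(G) := \min\{\chi(G[D]) : D \text{ a total dominating set of } G\}$, where $G[D]$ is the subgraph induced by $D$. *)

theory Defs
  imports Main
begin

definition simple_graph :: "'a set \<Rightarrow> ('a \<Rightarrow> 'a \<Rightarrow> bool) \<Rightarrow> bool" where
  "simple_graph V E \<longleftrightarrow> finite V \<and> (\<forall>u v. E u v \<longrightarrow> u \<in> V \<and> v \<in> V)
     \<and> (\<forall>u v. E u v \<longrightarrow> E v u) \<and> (\<forall>v. \<not> E v v)"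

definition regular_graph :: "'a set \<Rightarrow> ('a \<Rightarrow> 'a \<Rightarrow> bool) \<Rightarrow> bool" where
  "regular_graph V E \<longleftrightarrow> (\<exists>d. \<forall>v\<in>V. card {u \<in> V. E v u} = d)"

definition colouring :: "'a set \<Rightarrow> ('a \<Rightarrow> 'a \<Rightarrow> bool) \<Rightarrow> nat \<Rightarrow> ('a \<Rightarrow> nat) \<Rightarrow> bool" where
  "colouring V E k f \<longleftrightarrow> (\<forall>v\<in>V. f v < k) \<and> (\<forall>u\<in>V. \<forall>v\<in>V. E u v \<longrightarrow> f u \<noteq> f v)"

definition chromatic_number :: "'a set \<Rightarrow> ('a \<Rightarrow> 'a \<Rightarrow> bool) \<Rightarrow> nat" where
  "chromatic_number V E = (LEAST k. \<exists>f. colouring V E k f)"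

definition induced_edges :: "('a \<Rightarrow> 'a \<Rightarrow> bool) \<Rightarrow> 'a set \<Rightarrow> 'a \<Rightarrow> 'a \<Rightarrow> bool" where
  "induced_edges E D = (\<lambda>u v. E u v \<and> u \<in> D \<and> v \<in> D)"

definition total_dominating_set :: "'a set \<Rightarrow> ('a \<Rightarrow> 'a \<Rightarrow> bool) \<Rightarrow> 'a set \<Rightarrow> bool" where
  "total_dominating_set V E D \<longleftrightarrow> D \<subseteq> V \<and> (\<forall>v\<in>V. \<exists>u\<in>D. E v u)"

text \<open>gamma(G) = min chi(G[D]) over total dominating sets D (meaningful when
  a total dominating set exists).\<close>
definition gamma_td :: "'a set \<Rightarrow> ('a \<Rightarrow> 'a \<Rightarrow> bool) \<Rightarrow> nat" where
  "gamma_td V E = Min {chromatic_number D (induced_edges E D) | D. total_dominating_set V E D}"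

end

theory Submission
  imports Defs "HOL-Library.FuncSet"
begin

definition good :: "'a set \<Rightarrow> ('a \<Rightarrow> 'a \<Rightarrow> bool) \<Rightarrow> nat \<Rightarrow> bool" where
  "good V E n \<longleftrightarrow> simple_graph V E \<and> regular_graph V E \<and> (\<exists>f. colouring V E n f)
     \<and> total_dominating_set V E V
     \<and> (\<forall>D k g. total_dominating_set V E D \<longrightarrow> colouring D (induced_edges E D) k g \<longrightarrow> n \<le> k)"

lemma goodA:
  assumes "good V E n"
  shows "chromatic_number V E = n \<and> (\<exists>D. total_dominating_set V E D) \<and> gamma_td V E = n"
proof -
  from assms obtain f where f: "colouring V E n f" unfolding good_def by blast
  have sg: "simple_graph V E" and tv: "total_dominating_set V E V"
    and low: "\<And>D k g. total_dominating_set V E D \<Longrightarrow> colouring D (induced_edges E D) k g \<Longrightarrow> n \<le> k"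
    using assms unfolding good_def by blast+
  have key: "chromatic_number D (induced_edges E D) = n" if D: "total_dominating_set V E D" for D
  proof -
    have "D \<subseteq> V" using D unfolding total_dominating_set_def by blast
    hence "colouring D (induced_edges E D) n f" using f
      unfolding colouring_def induced_edges_def by blast
    then show ?thesis unfolding chromatic_number_def
      by (intro Least_equality) (auto intro: low[OF D])
  qed
  have ie: "induced_edges E V = E"
    using sg unfolding induced_edges_def simple_graph_def by (intro ext) blast
  have c1: "chromatic_number V E = n" using key[OF tv] ie by simp
  have "{chromatic_number D (induced_edges E D) | D. total_dominating_set V E D} = {n}"
    using key tv by blast
  hence "gamma_td V E = n" unfolding gamma_td_def by simp
  with c1 tv show ?thesis by blast
qed

lemma goodB:
  fixes \<phi> :: "'a \<Rightarrow> 'b"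
  assumes g: "good V E n" and inj: "inj_on \<phi> V"
  shows "good (\<phi> ` V) (\<lambda>u v. u \<in> \<phi> ` V \<and> v \<in> \<phi> ` V \<and> E (inv_into V \<phi> u) (inv_into V \<phi> v)) n"
    (is "good ?V ?E n")
proof -
  let ?\<psi> = "inv_into V \<phi>"
  have sg: "simple_graph V E" and tv: "total_dominating_set V E V"
    and low: "\<And>D k g. total_dominating_set V E D \<Longrightarrow> colouring D (induced_edges E D) k g \<Longrightarrow> n \<le> k"
    and reg: "regular_graph V E"
    using g unfolding good_def by blast+
  from g obtain f where f: "colouring V E n f" unfolding good_def by blast
  have psi1: "\<And>v. v \<in> V \<Longrightarrow> ?\<psi> (\<phi> v) = v" using inj by (simp add: inv_into_f_f)
  have psi2: "\<And>u. u \<in> ?V \<Longrightarrow> ?\<psi> u \<in> V \<and> \<phi> (?\<psi> u) = u"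
    by (auto simp: inv_into_into f_inv_into_f)
  have s1: "simple_graph ?V ?E"
    using sg unfolding simple_graph_def by auto
  from reg obtain d where d: "\<forall>v\<in>V. card {u \<in> V. E v u} = d" unfolding regular_graph_def by blast
  have "card {u \<in> ?V. ?E w u} = d" if w: "w \<in> ?V" for w
  proof -
    have "{u \<in> ?V. ?E w u} = \<phi> ` {u \<in> V. E (?\<psi> w) u}"
      using w psi1 psi2 by (auto simp: image_iff)
    moreover have "card (\<phi> ` {u \<in> V. E (?\<psi> w) u}) = card {u \<in> V. E (?\<psi> w) u}"
      by (rule card_image) (rule inj_on_subset[OF inj], blast)
    ultimately show ?thesis using d psi2[OF w] by simp
  qed
  hence r1: "regular_graph ?V ?E" unfolding regular_graph_def by blast
  have c1: "colouring ?V ?E n (f \<circ> ?\<psi>)"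
    using f psi2 unfolding colouring_def by auto
  have t1: "total_dominating_set ?V ?E ?V"
    using tv psi1 unfolding total_dominating_set_def by (auto simp: image_iff)
  have l1: "n \<le> k" if D: "total_dominating_set ?V ?E D" and cg: "colouring D (induced_edges ?E D) k gg" for D k gg
  proof -
    have DV: "D \<subseteq> ?V" using D unfolding total_dominating_set_def by blast
    have "total_dominating_set V E (?\<psi> ` D)"
      unfolding total_dominating_set_def
    proof (intro conjI ballI)
      show "?\<psi> ` D \<subseteq> V" using DV psi2 by blast
    next
      fix v assume v: "v \<in> V"
      then obtain u where u: "u \<in> D" "?E (\<phi> v) u" using D unfolding total_dominating_set_def by blast
      have "E v (?\<psi> u)" using u(2) psi1[OF v] by simp
      moreover have "?\<psi> u \<in> ?\<psi> ` D" using u(1) by (rule imageI)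
      ultimately show "\<exists>u\<in>?\<psi> ` D. E v u" by blast
    qed
    moreover have "colouring (?\<psi> ` D) (induced_edges E (?\<psi> ` D)) k (gg \<circ> \<phi>)"
      unfolding colouring_def
    proof (intro conjI ballI impI)
      fix v assume "v \<in> ?\<psi> ` D"
      then obtain u where u: "u \<in> D" "v = ?\<psi> u" by blast
      have "\<phi> v = u" using u DV psi2 by blast
      then show "(gg \<circ> \<phi>) v < k" using cg u(1) unfolding colouring_def by simp
    next
      fix v w assume "v \<in> ?\<psi> ` D" "w \<in> ?\<psi> ` D" and e: "induced_edges E (?\<psi> ` D) v w"
      then obtain u u' where u: "u \<in> D" "v = ?\<psi> u" "u' \<in> D" "w = ?\<psi> u'" by blast
      have p: "\<phi> v = u" "\<phi> w = u'" using u DV psi2 by blast+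
      have "induced_edges ?E D u u'" using e u DV unfolding induced_edges_def by auto
      then show "(gg \<circ> \<phi>) v \<noteq> (gg \<circ> \<phi>) w" using cg u p unfolding colouring_def by simp
    qed
    ultimately show ?thesis by (rule low)
  qed
  show ?thesis unfolding good_def using s1 r1 c1 t1 l1 by blast
qed


type_synonym vt = "(nat \<times> nat \<times> nat) + (nat \<times> nat \<times> (nat \<Rightarrow> nat))"

definition tt :: "nat \<Rightarrow> nat" where "tt n = n * (n - 1) ^ n"

definition HS :: "nat \<Rightarrow> (nat \<times> nat \<times> nat) set" where
  "HS n = {0..n} \<times> {0..<n} \<times> {0..<tt n}"

definition XS :: "nat \<Rightarrow> (nat \<times> nat \<times> (nat \<Rightarrow> nat)) set" where
  "XS n = (SIGMA m:{0..n}. SIGMA c:{0..<n}. PiE ({0..n} - {m}) (\<lambda>_. {0..<n} - {c}))"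

definition CV :: "nat \<Rightarrow> ((nat \<times> nat \<times> nat) + (nat \<times> nat \<times> (nat \<Rightarrow> nat))) set" where
  "CV n = Inl ` HS n \<union> Inr ` XS n"

fun adj :: "((nat \<times> nat \<times> nat) + (nat \<times> nat \<times> (nat \<Rightarrow> nat))) \<Rightarrow> ((nat \<times> nat \<times> nat) + (nat \<times> nat \<times> (nat \<Rightarrow> nat))) \<Rightarrow> bool" where
  "adj (Inl (j, i, k)) (Inl (j', i', k')) = (j = j' \<and> i \<noteq> i')"
| "adj (Inl (j, i, k)) (Inr (m, c, h)) = (j \<noteq> m \<and> h j = i)"
| "adj (Inr (m, c, h)) (Inl (j, i, k)) = (j \<noteq> m \<and> h j = i)"
| "adj (Inr x) (Inr y) = False"

definition CE where "CE n u v = (u \<in> CV n \<and> v \<in> CV n \<and> adj u v)"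

lemma adj_sym: "adj u v = adj v u"
  by (cases u; cases v) auto

lemma adj_irr: "\<not> adj u u"
  by (cases u) auto

lemma finite_CV: "finite (CV n)"
  unfolding CV_def HS_def XS_def by (auto intro!: finite_PiE)

lemma CV_Inl: "Inl (j, i, k) \<in> CV n \<longleftrightarrow> j \<le> n \<and> i < n \<and> k < tt n"
  unfolding CV_def HS_def by auto

lemma CV_Inr: "Inr (m, c, h) \<in> CV n \<longleftrightarrow> m \<le> n \<and> c < n \<and> h \<in> PiE ({0..n} - {m}) (\<lambda>_. {0..<n} - {c})"
proof -
  have "Inr (m, c, h) \<in> CV n \<longleftrightarrow> (m, c, h) \<in> XS n"
    unfolding CV_def by blast
  also have "\<dots> \<longleftrightarrow> m \<le> n \<and> c < n \<and> h \<in> PiE ({0..n} - {m}) (\<lambda>_. {0..<n} - {c})"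
    unfolding XS_def by simp
  finally show ?thesis .
qed

lemma deg_Inr:
  assumes v: "Inr (m, c, h) \<in> CV n"
  shows "card {u \<in> CV n. CE n (Inr (m, c, h)) u} = n * tt n"
proof -
  have mn: "m \<le> n" and hP: "h \<in> PiE ({0..n} - {m}) (\<lambda>_. {0..<n} - {c})" using v CV_Inr by auto
  have "{u \<in> CV n. CE n (Inr (m, c, h)) u} = Inl ` ((\<lambda>(j, k). (j, h j, k)) ` (({0..n} - {m}) \<times> {0..<tt n}))"
  proof (intro equalityI subsetI)
    fix u assume u: "u \<in> {u \<in> CV n. CE n (Inr (m, c, h)) u}"
    show "u \<in> Inl ` ((\<lambda>(j, k). (j, h j, k)) ` (({0..n} - {m}) \<times> {0..<tt n}))"
    proof (cases u)
      case (Inl a)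
      then obtain j i k where "u = Inl (j, i, k)" by (cases a) auto
      then have "u = Inl ((\<lambda>(j, k). (j, h j, k)) (j, k))" "(j, k) \<in> ({0..n} - {m}) \<times> {0..<tt n}"
        using u unfolding CE_def by (auto simp: CV_Inl)
      then show ?thesis by blast
    next
      case (Inr b)
      then show ?thesis using u unfolding CE_def by (cases b) auto
    qed
  next
    fix u :: vt assume "u \<in> Inl ` ((\<lambda>(j, k). (j, h j, k)) ` (({0..n} - {m}) \<times> {0..<tt n}))"
    then obtain j k where u: "u = Inl (j, h j, k)" "j \<le> n" "j \<noteq> m" "k < tt n" by force
    have "h j < n" using hP u by (auto simp: PiE_iff)
    then show "u \<in> {u \<in> CV n. CE n (Inr (m, c, h)) u}" using u v unfolding CE_def by (auto simp: CV_Inl)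
  qed
  moreover have "card (Inl ` ((\<lambda>(j, k). (j, h j, k)) ` (({0..n} - {m}) \<times> {0..<tt n}))) = n * tt n"
  proof -
    have i1: "inj_on (\<lambda>(j, k). (j, h j, k)) (({0..n} - {m}) \<times> {0..<tt n})"
      by (auto simp: inj_on_def)
    have "card ({0..n} - {m}) = n" using mn by simp
    then show ?thesis
      by (simp add: card_image i1 card_cartesian_product)
  qed
  ultimately show ?thesis by simp
qed


lemma PiE_fix:
  assumes "j \<in> A" "i \<in> B j"
  shows "{h \<in> PiE A B. h j = i} = PiE A (B(j := {i}))"
proof (intro equalityI subsetI)
  fix h assume "h \<in> {h \<in> PiE A B. h j = i}"
  then show "h \<in> PiE A (B(j := {i}))" by (auto simp: PiE_iff)
next
  fix h assume h: "h \<in> PiE A (B(j := {i}))"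
  have "h j = i" using h assms(1) by (auto simp: PiE_iff dest!: bspec[of _ _ j])
  moreover have "h a \<in> B a" if "a \<in> A" for a
    using h that \<open>h j = i\<close> assms(2) by (cases "a = j") (auto simp: PiE_iff dest!: bspec[of _ _ a])
  ultimately show "h \<in> {h \<in> PiE A B. h j = i}" using h by (auto simp: PiE_iff)
qed

lemma card_PiE_fix:
  assumes n: "n \<ge> 2" and m: "m \<le> n" and j: "j \<le> n" "j \<noteq> m"
    and c: "c < n"
  shows "card (PiE ({0..n} - {m}) ((\<lambda>_. {0..<n} - {c})(j := {i}))) = (n - 1) ^ (n - 1)"
proof -
  let ?A = "{0..n} - {m}"
  let ?f = "\<lambda>a. card (((\<lambda>_. {0..<n} - {c})(j := {i})) a)"
  have jA: "j \<in> ?A" using j by simp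
  have "card (PiE ?A ((\<lambda>_. {0..<n} - {c})(j := {i}))) = prod ?f ?A"
    by (simp add: card_PiE)
  also have "\<dots> = ?f j * prod ?f (?A - {j})"
    by (rule prod.remove[OF _ jA]) simp
  also have "prod ?f (?A - {j}) = prod (\<lambda>_. card ({0..<n} - {c})) (?A - {j})"
    by (rule prod.cong) auto
  also have "\<dots> = card ({0..<n} - {c}) ^ card (?A - {j})" by simp
  also have "card (?A - {j}) = n - 1" using m jA by (simp add: card_Diff_singleton)
  finally have "card (PiE ?A ((\<lambda>_. {0..<n} - {c})(j := {i}))) = ?f j * card ({0..<n} - {c}) ^ (n - 1)" .
  then show ?thesis using c by simp
qed


lemma deg_Inl:
  assumes n: "n \<ge> 2" and v: "Inl (j, i, k) \<in> CV n"
  shows "card {u \<in> CV n. CE n (Inl (j, i, k)) u} = n * tt n"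
proof -
  have jn: "j \<le> n" and "i < n" "k < tt n" using v CV_Inl by auto
  let ?L = "{j} \<times> ({0..<n} - {i}) \<times> {0..<tt n}"
  let ?R = "SIGMA m:{0..n} - {j}. SIGMA c:{0..<n} - {i}. PiE ({0..n} - {m}) ((\<lambda>_. {0..<n} - {c})(j := {i}))"
  have eq: "{u \<in> CV n. CE n (Inl (j, i, k)) u} = Inl ` ?L \<union> Inr ` ?R"
  proof (intro equalityI subsetI)
    fix u assume u: "u \<in> {u \<in> CV n. CE n (Inl (j, i, k)) u}"
    show "u \<in> Inl ` ?L \<union> Inr ` ?R"
    proof (cases u)
      case (Inl a)
      then obtain j' i' k' where "u = Inl (j', i', k')" by (cases a) auto
      then show ?thesis using u unfolding CE_def by (auto simp: CV_Inl)
    next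
      case (Inr b)
      then obtain m c h where uu: "u = Inr (m, c, h)" by (cases b) auto
      have m: "m \<le> n" "c < n" and hP: "h \<in> PiE ({0..n} - {m}) (\<lambda>_. {0..<n} - {c})"
        using u uu CV_Inr by auto
      have jm: "j \<noteq> m" "h j = i" using u uu unfolding CE_def by auto
      have "h j \<in> {0..<n} - {c}" using hP jm jn by (auto simp: PiE_iff)
      hence ci: "c \<noteq> i" using jm by auto
      have "h \<in> PiE ({0..n} - {m}) ((\<lambda>_. {0..<n} - {c})(j := {i}))"
        using hP jm by (auto simp: PiE_iff)
      then show ?thesis using uu m ci jm by auto
    qed
  next
    fix u :: vt assume "u \<in> Inl ` ?L \<union> Inr ` ?R"
    then show "u \<in> {u \<in> CV n. CE n (Inl (j, i, k)) u}"
    proof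
      assume "u \<in> Inl ` ?L"
      then show ?thesis using v jn unfolding CE_def by (auto simp: CV_Inl)
    next
      assume "u \<in> Inr ` ?R"
      then obtain m c h where uu: "u = Inr (m, c, h)" and m: "m \<le> n" "m \<noteq> j" "c < n" "c \<noteq> i"
        and hP: "h \<in> PiE ({0..n} - {m}) ((\<lambda>_. {0..<n} - {c})(j := {i}))" by force
      have "h \<in> PiE ({0..n} - {m}) (\<lambda>_. {0..<n} - {c})" "h j = i"
        using hP m jn \<open>i < n\<close> by (auto simp: PiE_iff split: if_splits)
      then show ?thesis using uu m v unfolding CE_def by (auto simp: CV_Inr)
    qed
  qed
  have cL: "card (Inl ` ?L :: vt set) = (n - 1) * tt n"
    by (simp add: card_image card_cartesian_product \<open>i < n\<close>)
  have cR: "card (Inr ` ?R :: vt set) = n * ((n - 1) * (n - 1) ^ (n - 1))"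
  proof -
    have "card (Inr ` ?R :: vt set) = card ?R" by (simp add: card_image)
    also have "\<dots> = (\<Sum>m\<in>{0..n} - {j}. \<Sum>c\<in>{0..<n} - {i}. card (PiE ({0..n} - {m}) ((\<lambda>_. {0..<n} - {c})(j := {i}))))"
      by (simp add: card_SigmaI finite_PiE)
    also have "\<dots> = (\<Sum>m\<in>{0..n} - {j}. \<Sum>c\<in>{0..<n} - {i}. (n - 1) ^ (n - 1))"
    proof (intro sum.cong refl)
      fix m c assume "m \<in> {0..n} - {j}" "c \<in> {0..<n} - {i}"
      then show "card (PiE ({0..n} - {m}) ((\<lambda>_. {0..<n} - {c})(j := {i}))) = (n - 1) ^ (n - 1)"
        using card_PiE_fix[OF n _ jn, of m c i] by auto
    qed
    also have "\<dots> = n * ((n - 1) * (n - 1) ^ (n - 1))"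
      using jn \<open>i < n\<close> by simp
    finally show ?thesis .
  qed
  have "card (Inl ` ?L \<union> Inr ` ?R :: vt set) = card (Inl ` ?L :: vt set) + card (Inr ` ?R :: vt set)"
  proof (rule card_Un_disjoint)
    show "finite (Inl ` ?L :: vt set)" by simp
    show "finite (Inr ` ?R :: vt set)" by (intro finite_imageI finite_SigmaI finite_PiE) auto
    show "(Inl ` ?L :: vt set) \<inter> Inr ` ?R = {}" by auto
  qed
  also have "\<dots> = (n - 1) * tt n + n * ((n - 1) * (n - 1) ^ (n - 1))" using cL cR by simp
  also have "\<dots> = n * tt n"
  proof -
    have pw: "(n - 1) * (n - 1) ^ (n - 1) = (n - 1) ^ n"
      using n by (cases n) auto
    have "(n - 1) * tt n + n * ((n - 1) * (n - 1) ^ (n - 1)) = (n - 1) * tt n + 1 * tt n"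
      unfolding pw tt_def by simp
    also have "\<dots> = ((n - 1) + 1) * tt n" by (simp add: algebra_simps)
    also have "(n - 1) + 1 = n" using n by simp
    finally show ?thesis .
  qed
  finally show ?thesis using eq by simp
qed

definition col :: "vt \<Rightarrow> nat" where
  "col = case_sum (\<lambda>(j, i, k). i) (\<lambda>(m, c, h). c)"

lemma tt_pos: "n \<ge> 2 \<Longrightarrow> tt n > 0"
  unfolding tt_def by simp

lemma CV_cases:
  assumes "u \<in> CV n"
  obtains j i k where "u = Inl (j, i, k)" "j \<le> n" "i < n" "k < tt n"
  | m c h where "u = Inr (m, c, h)" "m \<le> n" "c < n" "h \<in> PiE ({0..n} - {m}) (\<lambda>_. {0..<n} - {c})"
proof (cases u)
  case (Inl a)
  then obtain j i k where "u = Inl (j, i, k)" by (cases a) auto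
  then show ?thesis using that(1) assms by (simp add: CV_Inl)
next
  case (Inr b)
  then obtain m c h where "u = Inr (m, c, h)" by (cases b) auto
  then show ?thesis using that(2) assms by (simp add: CV_Inr)
qed

lemma clique_bound:
  fixes w :: "nat \<Rightarrow> 'a"
  assumes cg: "colouring D F k g" and wD: "\<And>i. i < n \<Longrightarrow> w i \<in> D"
    and we: "\<And>i i'. i < n \<Longrightarrow> i' < n \<Longrightarrow> i \<noteq> i' \<Longrightarrow> F (w i) (w i')"
  shows "n \<le> k"
proof -
  have "inj_on (g \<circ> w) {0..<n}"
    using cg wD we unfolding colouring_def inj_on_def by (metis atLeastLessThan_iff comp_apply)
  moreover have "(g \<circ> w) ` {0..<n} \<subseteq> {0..<k}"
    using cg wD unfolding colouring_def by auto
  ultimately have "card {0..<n} \<le> card {0..<k}" by (rule card_inj_on_le) simp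
  then show ?thesis by simp
qed

lemma goodC:
  assumes n: "n \<ge> 2"
  shows "good (CV n) (CE n) n"
proof -
  have t0: "tt n > 0" using tt_pos[OF n] .
  have sg: "simple_graph (CV n) (CE n)"
    unfolding simple_graph_def CE_def using finite_CV adj_sym adj_irr by blast
  have reg: "regular_graph (CV n) (CE n)"
    unfolding regular_graph_def
  proof (intro exI ballI)
    fix v assume vV: "v \<in> CV n"
    then show "card {u \<in> CV n. CE n v u} = n * tt n"
      by (cases rule: CV_cases) (use vV deg_Inl[OF n] deg_Inr in auto)
  qed
  have colr: "colouring (CV n) (CE n) n col"
    unfolding colouring_def
  proof (intro conjI ballI impI)
    fix v assume "v \<in> CV n"
    then show "col v < n" by (cases rule: CV_cases) (auto simp: col_def)
  next
    fix u v assume u: "u \<in> CV n" and v: "v \<in> CV n" and e: "CE n u v"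
    from u show "col u \<noteq> col v"
    proof (cases rule: CV_cases)
      case U: (1 j i k)
      from v show ?thesis
      proof (cases rule: CV_cases)
        case (1 j' i' k')
        then show ?thesis using e U unfolding CE_def by (auto simp: col_def)
      next
        case (2 m c h)
        have "h j \<in> {0..<n} - {c}" using 2 e U unfolding CE_def by (auto simp: PiE_iff)
        then show ?thesis using 2 e U unfolding CE_def by (auto simp: col_def)
      qed
    next
      case U: (2 m c h)
      from v show ?thesis
      proof (cases rule: CV_cases)
        case (1 j i k)
        have "h j \<in> {0..<n} - {c}" using 1 U e unfolding CE_def by (auto simp: PiE_iff)
        then show ?thesis using 1 U e unfolding CE_def by (auto simp: col_def)
      next
        case (2 m' c' h')
        then show ?thesis using e U unfolding CE_def by auto
      qed
    qed
  qed
  have tv: "total_dominating_set (CV n) (CE n) (CV n)"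
    unfolding total_dominating_set_def
  proof (intro conjI ballI subset_refl)
    fix v assume v: "v \<in> CV n"
    then show "\<exists>u\<in>CV n. CE n v u"
    proof (cases rule: CV_cases)
      case (1 j i k)
      let ?u = "Inl (j, if i = 0 then 1 else 0, 0) :: vt"
      have uV: "?u \<in> CV n" using 1 n t0 by (auto simp: CV_Inl)
      moreover have "CE n v ?u" using 1 v uV unfolding CE_def by auto
      ultimately show ?thesis by blast
    next
      case (2 m c h)
      define j where "j = (if m = 0 then 1 else 0::nat)"
      have j: "j \<le> n" "j \<noteq> m" using n unfolding j_def by auto
      let ?u = "Inl (j, h j, 0) :: vt"
      have "h j < n" using 2 j by (auto simp: PiE_iff)
      hence uV: "?u \<in> CV n" using j t0 by (auto simp: CV_Inl)
      moreover have "CE n v ?u" using 2 v j uV unfolding CE_def by auto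
      ultimately show ?thesis by blast
    qed
  qed
  have low: "n \<le> k" if D: "total_dominating_set (CV n) (CE n) D"
    and cg: "colouring D (induced_edges (CE n) D) k g" for D k g
  proof (cases "\<exists>j\<le>n. \<forall>i<n. \<exists>k'<tt n. Inl (j, i, k') \<in> D")
    case True
    then obtain j where j: "j \<le> n" and a: "\<forall>i<n. \<exists>k'<tt n. Inl (j, i, k') \<in> D" by blast
    define sel where "sel i = (SOME k'. k' < tt n \<and> Inl (j, i, k') \<in> D)" for i
    have sel: "sel i < tt n \<and> Inl (j, i, sel i) \<in> D" if "i < n" for i
      unfolding sel_def using a that by (metis (no_types, lifting) someI_ex)
    show ?thesis
    proof (rule clique_bound[OF cg, of n "\<lambda>i. Inl (j, i, sel i)"])
      show "Inl (j, i, sel i) \<in> D" if "i < n" for i using sel that by blast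
      show "induced_edges (CE n) D (Inl (j, i, sel i)) (Inl (j, i', sel i'))"
        if "i < n" "i' < n" "i \<noteq> i'" for i i'
        using sel[OF that(1)] sel[OF that(2)] that j unfolding induced_edges_def CE_def
        by (auto simp: CV_Inl)
    qed
  next
    case False
    hence "\<forall>j. \<exists>i. j \<le> n \<longrightarrow> i < n \<and> (\<forall>k'<tt n. Inl (j, i, k') \<notin> D)" by auto
    then obtain gg where gg: "\<And>j. j \<le> n \<Longrightarrow> gg j < n \<and> (\<forall>k'<tt n. Inl (j, gg j, k') \<notin> D)"
      by metis
    have "\<not> inj_on gg {0..n}"
    proof
      assume "inj_on gg {0..n}"
      moreover have "gg ` {0..n} \<subseteq> {0..<n}" using gg by auto
      ultimately have "card {0..n} \<le> card {0..<n}" by (rule card_inj_on_le) simp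
      then show False by simp
    qed
    then obtain a b where ab: "a \<le> n" "b \<le> n" "a \<noteq> b" "gg a = gg b"
      unfolding inj_on_def by auto
    define m where "m = (if 0 \<noteq> a \<and> 0 \<noteq> b then 0 else if 1 \<noteq> a \<and> 1 \<noteq> b then 1 else (2::nat))"
    have m: "m \<le> n" "m \<noteq> a" "m \<noteq> b" using n ab unfolding m_def by auto
    let ?A = "{0..n} - {m}"
    have "gg ` ?A = gg ` (?A - {b})"
    proof
      show "gg ` ?A \<subseteq> gg ` (?A - {b})"
      proof
        fix y assume "y \<in> gg ` ?A"
        then obtain x where x: "x \<in> ?A" "y = gg x" by blast
        show "y \<in> gg ` (?A - {b})"
        proof (cases "x = b")
          case True
          then have "y = gg a" using x ab by simp
          moreover have "a \<in> ?A - {b}" using ab m by auto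
          ultimately show ?thesis by blast
        next
          case False
          then show ?thesis using x by blast
        qed
      qed
    qed blast
    hence "card (gg ` ?A) \<le> card (?A - {b})" by (metis card_image_le finite_Diff finite_atLeastAtMost)
    also have "card (?A - {b}) = n - 1" using m ab by (simp add: card_Diff_singleton)
    finally have cA: "card (gg ` ?A) < card {0..<n}" using n by simp
    have sub: "gg ` ?A \<subseteq> {0..<n}" using gg by auto
    hence ne: "gg ` ?A \<noteq> {0..<n}" using cA by auto
    have "\<exists>c. c < n \<and> c \<notin> gg ` ?A"
    proof (rule ccontr)
      assume "\<not> ?thesis"
      hence "{0..<n} \<subseteq> gg ` ?A" by auto
      with sub ne show False by blast
    qed
    then obtain c where c: "c < n" "c \<notin> gg ` ?A" by blast
    define h where "h = restrict gg ?A"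
    have hP: "h \<in> PiE ?A (\<lambda>_. {0..<n} - {c})"
      unfolding h_def using gg c by (auto simp: PiE_iff)
    have xV: "Inr (m, c, h) \<in> CV n" using m c hP by (simp add: CV_Inr)
    then obtain u where uD: "u \<in> D" and e: "CE n (Inr (m, c, h)) u"
      using D unfolding total_dominating_set_def by blast
    have "u \<in> CV n" using e unfolding CE_def by blast
    then show ?thesis
    proof (cases rule: CV_cases)
      case (1 j i k')
      have "j \<noteq> m" "h j = i" using e 1 unfolding CE_def by auto
      hence "i = gg j" using 1 unfolding h_def by simp
      then show ?thesis using gg[OF \<open>j \<le> n\<close>] 1 uD by blast
    next
      case (2 m' c' h')
      then show ?thesis using e unfolding CE_def by simp
    qed
  qed
  show ?thesis unfolding good_def using sg reg colr tv low by blast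
qed

theorem theorem1p4:
  fixes n :: nat
  assumes "n \<ge> 2"
  shows "\<exists>(V :: nat set) E. simple_graph V E \<and> regular_graph V E
           \<and> chromatic_number V E = n
           \<and> (\<exists>D. total_dominating_set V E D)
           \<and> gamma_td V E = n"
proof -
  have g: "good (CV n) (CE n) n" using goodC[OF assms] .
  obtain \<phi> :: "vt \<Rightarrow> nat" and N where "\<phi> ` CV n = {i. i < N}" "inj_on \<phi> (CV n)"
    using finite_imp_inj_to_nat_seg[OF finite_CV] by blast
  then have g2: "good (\<phi> ` CV n) (\<lambda>u v. u \<in> \<phi> ` CV n \<and> v \<in> \<phi> ` CV n \<and> CE n (inv_into (CV n) \<phi> u) (inv_into (CV n) \<phi> v)) n"
    using goodB[OF g] by blast
  have "simple_graph (\<phi> ` CV n) (\<lambda>u v. u \<in> \<phi> ` CV n \<and> v \<in> \<phi> ` CV n \<and> CE n (inv_into (CV n) \<phi> u) (inv_into (CV n) \<phi> v))"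
    "regular_graph (\<phi> ` CV n) (\<lambda>u v. u \<in> \<phi> ` CV n \<and> v \<in> \<phi> ` CV n \<and> CE n (inv_into (CV n) \<phi> u) (inv_into (CV n) \<phi> v))"
    using g2 unfolding good_def by blast+
  with goodA[OF g2] show ?thesis by blast
qed

end
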